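(* A real-valued $C^2$ function $u$ on a domain in $\mathscr H$ is pluriharmonic if and only if $\triangle u=0$.
   Context: $\mathscr H=\mathbb R^{4n}\times\mathbb R$ with product $(x,t)\cdot(y,s)=\big(x+y,\,t+s+2\sum_{l=1}^{2n}(x_{2l-1}y_{2l}-x_{2l}y_{2l-1})\big)$ and vector fields $X_{2l-1}=\partial_{x_{2l-1}}-2x_{2l}\partial_t$, $X_{2l}=\partial_{x_{2l}}+2x_{2l-1}\partial_t$. For $l=0,\dots,n-1$: $Z_{l0'}=X_{4l+1}+\mathbf iX_{4l+2}$, $Z_{l1'}=-X_{4l+3}-\mathbf iX_{4l+4}$, $Z_{(n+l)0'}=X_{4l+3}-\mathbf iX_{4l+4}$, $Z_{(n+l)1'}=X_{4l+1}-\mathbf iX_{4l+2}$; with a basis $\omega^0,\dots,\omega^{2n-1}$ of $\mathbb C^{2n}$, $\triangle u=\sum_{A,B}\frac12(Z_{A0'}Z_{B1'}u-Z_{B0'}Z_{A1'}u)\omega^A\wedge\omega^B$. Identify $\mathbb R^{4n}\cong\mathbb H^n$ via $q_l=x_{4l+1}+\mathbf ix_{4l+2}+\mathbf jx_{4l+3}+\mathbf kx_{4l+4}$. For $p\in\mathbb H$ let $p^{\mathbb R}$ be the real $4\times4$ matrix of left multiplication by $p$ on $\mathbb R^4\cong\mathbb H$, $J=\begin{pmatrix}0&1&0&0\\-1&0&0&0\\0&0&0&1\\0&0&-1&0\end{pmatrix}$, $B^q=\sum_l(q_l^{\mathbb R})^tJq_l^{\mathbb R}$, $\Lambda_q=|\sum_l\overline{q_l}\mathbf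 iq_l|$, $\mathfrak D=\{q\in\mathbb H^n:\Lambda_q=0\}$. On $\mathbb R^5\ni(\lambda,t)$ let $\widetilde X_j=\partial_{\lambda_j}+2\sum_{k}B^q_{kj}\lambda_k\partial_t$ and $\widetilde\triangle_q=\sum_{j=1}^4\widetilde X_j^2$. With $\iota_{\eta,q}(\lambda,t)=\eta\cdot(q\lambda,t)$, $q\lambda=(q_0\lambda,\dots,q_{n-1}\lambda)$, $u$ is pluriharmonic if $\widetilde\triangle_q(u\circ\iota_{\eta,q})=0$ (where defined) for every $\eta\in\mathscr H$ and $q\in\mathbb H^n\setminus\mathfrak D$. *)

theory Defs
  imports "HOL-Analysis.Analysis"
begin

text \<open>Quaternions are modelled as real^4 with components 0,1,2,3 standing for
the coefficients of 1, i, j, k.  The space R^{4n} = H^n is real^4^'n: the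
coordinate x_{4l+a} (a = 1..4) is x $ l $ (a-1), with l ranging over the
finite type 'n of cardinality n.\<close>

type_synonym 'n hpt = "(real^4^'n) \<times> real"

definition qmult :: "real^4 \<Rightarrow> real^4 \<Rightarrow> real^4" where
  "qmult p r = (\<chi> i.
     if i = 0 then p$0*r$0 - p$1*r$1 - p$2*r$2 - p$3*r$3
     else if i = 1 then p$0*r$1 + p$1*r$0 + p$2*r$3 - p$3*r$2
     else if i = 2 then p$0*r$2 - p$1*r$3 + p$2*r$0 + p$3*r$1
     else p$0*r$3 + p$1*r$2 - p$2*r$1 + p$3*r$0)"

definition qconj :: "real^4 \<Rightarrow> real^4" where
  "qconj p = (\<chi> i. if i = 0 then p$0 else - p$i)"

definition qi :: "real^4" where "qi = axis 1 1"

definition hmult :: "'n::finite hpt \<Rightarrow> 'n hpt \<Rightarrow> 'n hpt" where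
  "hmult p r = (fst p + fst r,
     snd p + snd r + 2 * (\<Sum>l\<in>UNIV.
        (fst p$l$0 * fst r$l$1 - fst p$l$1 * fst r$l$0)
      + (fst p$l$2 * fst r$l$3 - fst p$l$3 * fst r$l$2)))"

definition dirder :: "('a::real_normed_vector \<Rightarrow> 'b::real_normed_vector) \<Rightarrow> 'a \<Rightarrow> 'a \<Rightarrow> 'b" where
  "dirder f p v = vector_derivative (\<lambda>s. f (p + s *\<^sub>R v)) (at 0)"

text \<open>The vector field X_{4l+a+1} (a = 0..3) at the point p, as a tangent vector.\<close>
definition Xvf :: "'n::finite \<Rightarrow> 4 \<Rightarrow> 'n hpt \<Rightarrow> 'n hpt" where
  "Xvf l a p = (axis l (axis a 1),
     (if a = 0 then - 2 * fst p$l$1 else if a = 1 then 2 * fst p$l$0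
      else if a = 2 then - 2 * fst p$l$3 else 2 * fst p$l$2))"

definition Xop :: "'n::finite \<Rightarrow> 4 \<Rightarrow> ('n hpt \<Rightarrow> complex) \<Rightarrow> 'n hpt \<Rightarrow> complex" where
  "Xop l a f p = dirder f p (Xvf l a p)"

text \<open>Z_{A A'}: index A :: 'n + 'n (Inl l = l, Inr l = n+l), A' :: bool
(False = 0', True = 1').\<close>
definition Zop :: "'n::finite + 'n \<Rightarrow> bool \<Rightarrow> ('n hpt \<Rightarrow> complex) \<Rightarrow> 'n hpt \<Rightarrow> complex" where
  "Zop A s f p = (case A of
     Inl l \<Rightarrow> (if \<not> s then Xop l 0 f p + \<i> * Xop l 1 f p
               else - Xop l 2 f p - \<i> * Xop l 3 f p)
   | Inr l \<Rightarrow> (if \<not> s then Xop l 2 f p - \<i> * Xop l 3 f p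
               else Xop l 0 f p - \<i> * Xop l 1 f p))"

text \<open>The 2-form triangle u at p, represented by its values on pairs of dual
basis vectors (e_C, e_D): sum_{A,B} c_{AB} (omega^A wedge omega^B)(e_C, e_D).\<close>
definition sublap :: "('n::finite hpt \<Rightarrow> real) \<Rightarrow> 'n hpt \<Rightarrow> ('n + 'n) \<Rightarrow> ('n + 'n) \<Rightarrow> complex" where
  "sublap u p C D' = (\<Sum>A\<in>UNIV. \<Sum>B\<in>UNIV.
      (1/2) * (Zop A False (Zop B True (\<lambda>x. complex_of_real (u x))) p
             - Zop B False (Zop A True (\<lambda>x. complex_of_real (u x))) p)
      * ((if A = C \<and> B = D' then 1 else 0) - (if A = D' \<and> B = C then 1 else 0)))"

definition qR :: "real^4 \<Rightarrow> real^4^4" where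
  "qR p = (\<chi> r c. qmult p (axis c 1) $ r)"

definition Jmat :: "real^4^4" where
  "Jmat = (\<chi> r c. if r = 0 \<and> c = 1 then 1 else if r = 1 \<and> c = 0 then -1
                 else if r = 2 \<and> c = 3 then 1 else if r = 3 \<and> c = 2 then -1 else 0)"

definition Bq :: "real^4^'n::finite \<Rightarrow> real^4^4" where
  "Bq q = (\<Sum>l\<in>UNIV. transpose (qR (q$l)) ** Jmat ** qR (q$l))"

definition Lambdaq :: "real^4^'n::finite \<Rightarrow> real" where
  "Lambdaq q = norm (\<Sum>l\<in>UNIV. qmult (qconj (q$l)) (qmult qi (q$l)))"

definition degset :: "(real^4^'n::finite) set" where
  "degset = {q. Lambdaq q = 0}"

text \<open>Vector field tilde X_j on R^5 = real^4 x real (j = 1..4 is index j-1 :: 4).\<close>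
definition tXvf :: "real^4^4 \<Rightarrow> 4 \<Rightarrow> ((real^4) \<times> real) \<Rightarrow> ((real^4) \<times> real)" where
  "tXvf B j w = (axis j 1, 2 * (\<Sum>k\<in>UNIV. B$k$j * fst w$k))"

definition tX :: "real^4^4 \<Rightarrow> 4 \<Rightarrow> (((real^4) \<times> real) \<Rightarrow> real) \<Rightarrow> ((real^4) \<times> real) \<Rightarrow> real" where
  "tX B j f w = dirder f w (tXvf B j w)"

definition tLap :: "real^4^'n::finite \<Rightarrow> (((real^4) \<times> real) \<Rightarrow> real) \<Rightarrow> ((real^4) \<times> real) \<Rightarrow> real" where
  "tLap q f w = (\<Sum>j\<in>UNIV. tX (Bq q) j (tX (Bq q) j f) w)"

definition iota :: "'n::finite hpt \<Rightarrow> real^4^'n \<Rightarrow> ((real^4) \<times> real) \<Rightarrow> 'n hpt" where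
  "iota \<eta> q w = hmult \<eta> (\<chi> l. qmult (q$l) (fst w), snd w)"

definition pluriharmonic :: "'n::finite hpt set \<Rightarrow> ('n hpt \<Rightarrow> real) \<Rightarrow> bool" where
  "pluriharmonic D u \<longleftrightarrow>
     (\<forall>\<eta> q. q \<notin> degset \<longrightarrow>
        (\<forall>w. iota \<eta> q w \<in> D \<longrightarrow> tLap q (\<lambda>w'. u (iota \<eta> q w')) w = 0))"

definition C2_on :: "'a::real_normed_vector set \<Rightarrow> ('a \<Rightarrow> real) \<Rightarrow> bool" where
  "C2_on D u \<longleftrightarrow> (\<exists>u' u''.
     (\<forall>x\<in>D. (u has_derivative blinfun_apply (u' x)) (at x)) \<and>
     (\<forall>x\<in>D. (u' has_derivative blinfun_apply (u'' x)) (at x)) \<and>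
     continuous_on D u'')"

end

theory Submission
  imports Defs "HOL-Analysis.Analysis"
begin

lemma UNIV4: "(UNIV::4 set) = {0,1,2,3}"
proof -
  have "(4::4) = 0" by simp
  then show ?thesis using UNIV_4 by auto
qed

lemma sum4: "sum f (UNIV::4 set) = f 0 + f 1 + f 2 + f 3"
  unfolding UNIV4 by (simp add: ac_simps)

definition E :: "'n::finite \<Rightarrow> 4 \<Rightarrow> real^4^'n" where "E l a = axis l (axis a 1)"

definition Tc :: "4 \<Rightarrow> (4 \<Rightarrow> 4 \<Rightarrow> real) \<Rightarrow> real" where
  "Tc c B = (\<Sum>a\<in>UNIV. \<Sum>b\<in>UNIV. B a b * qmult (axis c 1) (axis b 1) $ a)"

definition Phi :: "(4 \<Rightarrow> 4 \<Rightarrow> real) \<Rightarrow> real^4 \<Rightarrow> real^4 \<Rightarrow> real" where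
  "Phi B x y = (\<Sum>a\<in>UNIV. \<Sum>b\<in>UNIV. (\<Sum>j\<in>UNIV. qmult x (axis j 1) $ a * qmult y (axis j 1) $ b) * B a b)"

lemma qmult_zero: "qmult 0 y = 0" "qmult y 0 = 0" by (simp_all add: qmult_def vec_eq_iff)

lemma qmult_comp: "qmult p r $ 0 = p$0*r$0 - p$1*r$1 - p$2*r$2 - p$3*r$3"
  "qmult p r $ 1 = p$0*r$1 + p$1*r$0 + p$2*r$3 - p$3*r$2"
  "qmult p r $ 2 = p$0*r$2 - p$1*r$3 + p$2*r$0 + p$3*r$1"
  "qmult p r $ 3 = p$0*r$3 + p$1*r$2 - p$2*r$1 + p$3*r$0"
  by (simp_all add: qmult_def)

lemma qconj_comp: "qconj p $ 0 = p $ 0" "qconj p $ 1 = - p $ 1" "qconj p $ 2 = - p $ 2" "qconj p $ 3 = - p $ 3"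
  by (simp_all add: qconj_def)

lemma axis_comp: "axis (c::4) (1::real) $ d = (if d = c then 1 else 0)"
  by (simp add: axis_def)

lemma Phi_T: "Phi B x y = (\<Sum>c\<in>UNIV. qmult x (qconj y) $ c * Tc c B)"
  unfolding Phi_def Tc_def sum4 qmult_comp qconj_comp axis_comp
  by simp algebra


definition zv :: "bool \<Rightarrow> bool \<Rightarrow> 4 \<Rightarrow> complex" where
  "zv r s a = (if \<not> r \<and> \<not> s then (if a = 0 then 1 else if a = 1 then \<i> else 0)
     else if \<not> r \<and> s then (if a = 2 then -1 else if a = 3 then - \<i> else 0)
     else if r \<and> \<not> s then (if a = 2 then 1 else if a = 3 then - \<i> else 0)
     else (if a = 0 then 1 else if a = 1 then - \<i> else 0))"

definition gamB :: "bool \<Rightarrow> bool \<Rightarrow> (4 \<Rightarrow> 4 \<Rightarrow> real) \<Rightarrow> complex" where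
  "gamB r s B = (\<Sum>a\<in>UNIV. \<Sum>b\<in>UNIV. zv r False a * zv s True b * of_real (B a b))
     - (\<Sum>a\<in>UNIV. \<Sum>b\<in>UNIV. zv s False a * zv r True b * of_real (B b a))"

lemma gam_T:
  "gamB False True B = of_real (Tc 0 B) + \<i> * of_real (Tc 1 B)"
  "gamB False False B = of_real (Tc 2 B) + \<i> * of_real (Tc 3 B)"
  "gamB True False B = - of_real (Tc 0 B) + \<i> * of_real (Tc 1 B)"
  "gamB True True B = of_real (Tc 2 B) - \<i> * of_real (Tc 3 B)"
  unfolding gamB_def Tc_def sum4 qmult_comp axis_comp zv_def
  by (simp_all add: complex_eq_iff)

definition eps :: "4 \<Rightarrow> real" where "eps c = (if c = 0 then 1 else -1)"

lemma Tsym: "Tc c (\<lambda>a b. B b a) = eps c * Tc c B"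
proof -
  have "c = 0 \<or> c = 1 \<or> c = 2 \<or> c = 3" using UNIV4 by auto
  then show ?thesis
    unfolding Tc_def sum4 qmult_comp axis_comp eps_def by auto
qed

lemma vec_expand: "(v::real^4^'n::finite) = (\<Sum>l\<in>UNIV. \<Sum>a\<in>UNIV. (v$l$a) *\<^sub>R E l a)"
proof -
  have "(\<Sum>l\<in>UNIV. \<Sum>a\<in>UNIV. (v$l$a) *\<^sub>R E l a) $ i $ j = v $ i $ j" for i j
  proof -
    have "(\<Sum>l\<in>UNIV. \<Sum>a\<in>UNIV. (v$l$a) *\<^sub>R E l a) $ i $ j
        = (\<Sum>l\<in>UNIV. \<Sum>a\<in>UNIV. (if l = i then (if a = j then v$l$a else 0) else 0))"
      unfolding E_def by (simp, intro sum.cong refl) (auto simp: axis_def)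
    also have "\<dots> = (\<Sum>l\<in>UNIV. (if l = i then (\<Sum>a\<in>UNIV. if a = j then v$l$a else 0) else 0))"
      by (intro sum.cong refl) auto
    also have "\<dots> = v $ i $ j" by simp
    finally show ?thesis .
  qed
  then show ?thesis by (simp add: vec_eq_iff)
qed

lemma bil_expand:
  assumes "bilinear K"
  shows "K v w = (\<Sum>l\<in>UNIV. \<Sum>a\<in>UNIV. \<Sum>m\<in>UNIV. \<Sum>b\<in>UNIV.
                    v$l$a * w$m$b * K (E l a) (E m b))"
proof -
  have l1: "linear (\<lambda>x. K x y)" for y using assms unfolding bilinear_def by auto
  have l2: "linear (\<lambda>y. K x y)" for x using assms unfolding bilinear_def by auto
  have "K v w = K (\<Sum>l\<in>UNIV. \<Sum>a\<in>UNIV. (v$l$a) *\<^sub>R E l a) w"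
    using vec_expand[of v] by simp
  also have "\<dots> = (\<Sum>l\<in>UNIV. \<Sum>a\<in>UNIV. v$l$a * K (E l a) w)"
    by (simp add: linear_sum[OF l1] linear_scale[OF l1] o_def)
  also have "\<dots> = (\<Sum>l\<in>UNIV. \<Sum>a\<in>UNIV. v$l$a * K (E l a) (\<Sum>m\<in>UNIV. \<Sum>b\<in>UNIV. (w$m$b) *\<^sub>R E m b))"
    using vec_expand[of w] by simp
  also have "\<dots> = (\<Sum>l\<in>UNIV. \<Sum>a\<in>UNIV. \<Sum>m\<in>UNIV. \<Sum>b\<in>UNIV.
                    v$l$a * w$m$b * K (E l a) (E m b))"
    by (simp add: linear_sum[OF l2] linear_scale[OF l2] o_def sum_distrib_left mult.assoc)
  finally show ?thesis .
qed


lemma swap5: "(\<Sum>j\<in>A. \<Sum>l\<in>B. \<Sum>a\<in>C. \<Sum>m\<in>D. \<Sum>b\<in>F. f j l a m b)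
  = (\<Sum>l\<in>B. \<Sum>m\<in>D. \<Sum>a\<in>C. \<Sum>b\<in>F. \<Sum>j\<in>A. f j l a m b)"
proof -
  have "(\<Sum>j\<in>A. \<Sum>l\<in>B. \<Sum>a\<in>C. \<Sum>m\<in>D. \<Sum>b\<in>F. f j l a m b)
      = (\<Sum>l\<in>B. \<Sum>j\<in>A. \<Sum>a\<in>C. \<Sum>m\<in>D. \<Sum>b\<in>F. f j l a m b)" by (rule sum.swap)
  also have "\<dots> = (\<Sum>l\<in>B. \<Sum>a\<in>C. \<Sum>j\<in>A. \<Sum>m\<in>D. \<Sum>b\<in>F. f j l a m b)"
    by (rule sum.cong[OF refl], rule sum.swap)
  also have "\<dots> = (\<Sum>l\<in>B. \<Sum>a\<in>C. \<Sum>m\<in>D. \<Sum>j\<in>A. \<Sum>b\<in>F. f j l a m b)"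
    by (rule sum.cong[OF refl], rule sum.cong[OF refl], rule sum.swap)
  also have "\<dots> = (\<Sum>l\<in>B. \<Sum>a\<in>C. \<Sum>m\<in>D. \<Sum>b\<in>F. \<Sum>j\<in>A. f j l a m b)"
    by (rule sum.cong[OF refl], rule sum.cong[OF refl], rule sum.cong[OF refl], rule sum.swap)
  also have "\<dots> = (\<Sum>l\<in>B. \<Sum>m\<in>D. \<Sum>a\<in>C. \<Sum>b\<in>F. \<Sum>j\<in>A. f j l a m b)"
    by (rule sum.cong[OF refl], rule sum.swap)
  finally show ?thesis .
qed

definition Vq :: "real^4^'n::finite \<Rightarrow> 4 \<Rightarrow> real^4^'n" where
  "Vq q j = (\<chi> l. qmult (q$l) (axis j 1))"

definition Blk :: "(real^4^'n::finite \<Rightarrow> real^4^'n \<Rightarrow> real) \<Rightarrow> 'n \<Rightarrow> 'n \<Rightarrow> 4 \<Rightarrow> 4 \<Rightarrow> real" where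
  "Blk K l m = (\<lambda>a b. K (E l a) (E m b))"

lemma FQ_expand:
  assumes "bilinear K"
  shows "(\<Sum>j\<in>UNIV. K (Vq q j) (Vq q j)) = (\<Sum>l\<in>UNIV. \<Sum>m\<in>UNIV. Phi (Blk K l m) (q$l) (q$m))"
proof -
  have "(\<Sum>j\<in>UNIV. K (Vq q j) (Vq q j)) = (\<Sum>j\<in>UNIV. \<Sum>l\<in>UNIV. \<Sum>a\<in>UNIV. \<Sum>m\<in>UNIV. \<Sum>b\<in>UNIV.
      qmult (q$l) (axis j 1) $ a * qmult (q$m) (axis j 1) $ b * K (E l a) (E m b))"
    by (subst bil_expand[OF assms]) (simp add: Vq_def)
  also have "\<dots> = (\<Sum>l\<in>UNIV. \<Sum>m\<in>UNIV. \<Sum>a\<in>UNIV. \<Sum>b\<in>UNIV. \<Sum>j\<in>UNIV.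
      qmult (q$l) (axis j 1) $ a * qmult (q$m) (axis j 1) $ b * K (E l a) (E m b))"
    by (rule swap5)
  also have "\<dots> = (\<Sum>l\<in>UNIV. \<Sum>m\<in>UNIV. Phi (Blk K l m) (q$l) (q$m))"
    unfolding Phi_def Blk_def by (simp add: sum_distrib_right)
  finally show ?thesis .
qed

lemma sum_one: "(\<And>k. k \<noteq> l \<Longrightarrow> h k = 0) \<Longrightarrow> sum h (UNIV::'n::finite set) = h l"
  by (subst sum.mono_neutral_right[of UNIV "{l}"]) auto

lemma sum_two: "l \<noteq> m \<Longrightarrow> (\<And>k. k \<noteq> l \<Longrightarrow> k \<noteq> m \<Longrightarrow> h k = 0) \<Longrightarrow> sum h (UNIV::'n::finite set) = h l + h m"
  by (subst sum.mono_neutral_right[of UNIV "{l,m}"]) auto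

lemma Phi_zero: "Phi B 0 y = 0" "Phi B x 0 = 0"
  unfolding Phi_def by (simp_all add: qmult_zero)

lemma Lam_nz: assumes "(\<Sum>k\<in>UNIV. qmult (qconj (q$k)) (qmult qi (q$k))) $ 1 \<noteq> 0" shows "q \<notin> degset"
proof
  assume "q \<in> degset"
  then have "(\<Sum>k\<in>UNIV. qmult (qconj (q$k)) (qmult qi (q$k))) = 0"
    unfolding degset_def Lambdaq_def by simp
  then have "(\<Sum>k\<in>UNIV. qmult (qconj (q$k)) (qmult qi (q$k))) $ 1 = 0" by simp
  then show False using assms by simp
qed

lemma Blk_sym: "(\<forall>v w. K v w = K w v) \<Longrightarrow> Blk K m l = (\<lambda>a b. Blk K l m b a)"
  unfolding Blk_def by auto


lemma L1: "(\<chi> k. if k = l then axis 0 1 else 0) \<notin> (degset :: (real^4^'n::finite) set)"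
proof (rule Lam_nz)
  let ?q = "(\<chi> k. if k = l then axis 0 1 else 0) :: real^4^'n"
  have "(\<Sum>k\<in>UNIV. qmult (qconj (?q$k)) (qmult qi (?q$k))) = qmult (qconj (axis 0 1)) (qmult qi (axis 0 1))"
    by (rule trans[OF sum_one[of l]]) (simp_all add: qmult_zero qconj_def vec_eq_iff)
  then show "(\<Sum>k\<in>UNIV. qmult (qconj (?q$k)) (qmult qi (?q$k))) $ 1 \<noteq> 0"
    by (simp add: qmult_comp qconj_comp qi_def axis_comp)
qed


lemma L2:
  fixes K :: "real^4^'n::finite \<Rightarrow> real^4^'n \<Rightarrow> real"
  assumes bil: "bilinear K"
  shows "(\<Sum>j\<in>UNIV. K (Vq (\<chi> k. if k = l then axis 0 1 else 0) j) (Vq (\<chi> k. if k = l then axis 0 1 else 0) j))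
     = Tc 0 (Blk K l l)"
proof -
  let ?q = "(\<chi> k. if k = l then axis 0 1 else 0) :: real^4^'n"
  have "(\<Sum>j\<in>UNIV. K (Vq ?q j) (Vq ?q j)) = (\<Sum>m\<in>UNIV. Phi (Blk K l m) (?q$l) (?q$m))"
    unfolding FQ_expand[OF bil] by (rule sum_one) (simp add: Phi_zero)
  also have "\<dots> = Phi (Blk K l l) (axis 0 1) (axis 0 1)"
    by (rule trans[OF sum_one[of l]]) (simp_all add: Phi_zero)
  also have "\<dots> = Tc 0 (Blk K l l)"
    unfolding Phi_T sum4 by (simp add: qmult_comp qconj_comp axis_comp)
  finally show ?thesis .
qed

lemma L3:
  assumes lm: "l \<noteq> m" and c: "c = 0 \<or> c = 1 \<or> c = 2 \<or> c = 3"
  shows "(\<chi> k. if k = l then axis 0 1 else if k = m then 2 *\<^sub>R axis c 1 else 0) \<notin> (degset :: (real^4^'n::finite) set)"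
proof (rule Lam_nz)
  let ?q = "(\<chi> k. if k = l then axis 0 1 else if k = m then 2 *\<^sub>R axis c 1 else 0) :: real^4^'n"
  have "(\<Sum>k\<in>UNIV. qmult (qconj (?q$k)) (qmult qi (?q$k))) = qmult (qconj (axis 0 1)) (qmult qi (axis 0 1))
          + qmult (qconj (2 *\<^sub>R axis c 1)) (qmult qi (2 *\<^sub>R axis c 1))"
    by (rule trans[OF sum_two[OF lm]]) (use lm in \<open>simp_all add: qmult_zero qconj_def vec_eq_iff\<close>)
  then show "(\<Sum>k\<in>UNIV. qmult (qconj (?q$k)) (qmult qi (?q$k))) $ 1 \<noteq> 0"
    using c by (auto simp add: qmult_comp qconj_comp qi_def axis_comp)
qed


lemma L4:
  fixes K :: "real^4^'n::finite \<Rightarrow> real^4^'n \<Rightarrow> real"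
  assumes bil: "bilinear K" and lm: "l \<noteq> m"
  shows "(\<Sum>j\<in>UNIV. K (Vq (\<chi> k. if k = l then x else if k = m then y else 0) j) (Vq (\<chi> k. if k = l then x else if k = m then y else 0) j))
     = (Phi (Blk K l l) x x + Phi (Blk K l m) x y) + (Phi (Blk K m l) y x + Phi (Blk K m m) y y)"
proof -
  let ?q = "(\<chi> k. if k = l then x else if k = m then y else 0) :: real^4^'n"
  have "(\<Sum>j\<in>UNIV. K (Vq ?q j) (Vq ?q j)) = (\<Sum>m'\<in>UNIV. Phi (Blk K l m') (?q$l) (?q$m')) + (\<Sum>m'\<in>UNIV. Phi (Blk K m m') (?q$m) (?q$m'))"
    unfolding FQ_expand[OF bil] by (rule sum_two[OF lm]) (simp add: Phi_zero)
  also have "\<dots> = (Phi (Blk K l l) x x + Phi (Blk K l m) x y) + (Phi (Blk K m l) y x + Phi (Blk K m m) y y)"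
    using lm by (simp add: sum_two[OF lm] Phi_zero)
  finally show ?thesis .
qed

lemma L5:
  assumes c: "c = 0 \<or> c = 1 \<or> c = 2 \<or> c = 3"
    and d1: "\<forall>c. Tc c B1 = 0" and d2: "\<forall>c. Tc c B2 = 0"
  shows "(Phi B1 (axis 0 1) (axis 0 1) + Phi B (axis 0 1) (2 *\<^sub>R axis c 1))
       + (Phi (\<lambda>a b. B b a) (2 *\<^sub>R axis c 1) (axis 0 1) + Phi B2 (2 *\<^sub>R axis c 1) (2 *\<^sub>R axis c 1))
     = 4 * eps c * Tc c B"
proof -
  have ts: "Tc c' (\<lambda>a b. B b a) = eps c' * Tc c' B" for c' by (rule Tsym)
  show ?thesis
    using c unfolding Phi_T sum4 ts
    by (elim disjE) (simp_all add: qmult_comp qconj_comp axis_comp d1 d2 eps_def)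
qed


lemma P1:
  fixes K :: "real^4^'n::finite \<Rightarrow> real^4^'n \<Rightarrow> real"
  assumes bil: "bilinear K" and sym: "\<forall>v w. K v w = K w v"
  shows "(\<forall>q. q \<notin> degset \<longrightarrow> (\<Sum>j\<in>UNIV. K (Vq q j) (Vq q j)) = 0)
     \<longleftrightarrow> (\<forall>l m c. Tc c (Blk K l m) = 0)"
proof
  assume T: "\<forall>l m c. Tc c (Blk K l m) = 0"
  show "\<forall>q. q \<notin> degset \<longrightarrow> (\<Sum>j\<in>UNIV. K (Vq q j) (Vq q j)) = 0"
    using T by (simp add: FQ_expand[OF bil] Phi_T)
next
  assume H: "\<forall>q. q \<notin> degset \<longrightarrow> (\<Sum>j\<in>UNIV. K (Vq q j) (Vq q j)) = 0"
  have Tsw: "Tc c (Blk K m l) = eps c * Tc c (Blk K l m)" for l m c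
    using Blk_sym[OF sym, of m l] Tsym[of c "Blk K l m"] by simp
  have c4: "c = 0 \<or> c = 1 \<or> c = 2 \<or> c = 3" for c :: 4 using UNIV4 by auto
  have diag0: "Tc 0 (Blk K l l) = 0" for l
    using H L1[of l] L2[OF bil, of l] by simp
  have diag: "\<forall>c. Tc c (Blk K l l) = 0" for l
  proof
    fix c
    show "Tc c (Blk K l l) = 0"
    proof (cases "c = 0")
      case True then show ?thesis using diag0 by simp
    next
      case False
      then have "Tc c (Blk K l l) = - Tc c (Blk K l l)" using Tsw[of c l l] by (simp add: eps_def)
      then show ?thesis by simp
    qed
  qed
  have off: "Tc c (Blk K l m) = 0" if lm: "l \<noteq> m" for l m c
  proof -
    have "4 * eps c * Tc c (Blk K l m) = 0"
      using H L3[OF lm c4[of c]] L4[OF bil lm, of "axis 0 1" "2 *\<^sub>R axis c 1"]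
        L5[OF c4[of c] diag[of l] diag[of m], of "Blk K l m"] Blk_sym[OF sym, of m l]
      by simp
    then show ?thesis by (simp add: eps_def split: if_splits)
  qed
  show "\<forall>l m c. Tc c (Blk K l m) = 0"
    using diag off by metis
qed

lemma P2:
  "(\<forall>r s l m. gamB r s (Blk K l m) = 0) \<longleftrightarrow> (\<forall>l m c. Tc c (Blk K l m) = 0)"
proof
  assume T: "\<forall>l m c. Tc c (Blk K l m) = 0"
  show "\<forall>r s l m. gamB r s (Blk K l m) = 0"
  proof (intro allI)
    fix r s l m
    show "gamB r s (Blk K l m) = 0"
      using T by (cases r; cases s) (simp_all add: gam_T)
  qed
next
  assume G: "\<forall>r s l m. gamB r s (Blk K l m) = 0"
  have c4: "c = 0 \<or> c = 1 \<or> c = 2 \<or> c = 3" for c :: 4 using UNIV4 by auto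
  show "\<forall>l m c. Tc c (Blk K l m) = 0"
  proof (intro allI)
    fix l m c
    have a: "of_real (Tc 0 (Blk K l m)) + \<i> * of_real (Tc 1 (Blk K l m)) = 0"
      using G gam_T(1)[of "Blk K l m"] by metis
    have b: "of_real (Tc 2 (Blk K l m)) + \<i> * of_real (Tc 3 (Blk K l m)) = 0"
      using G gam_T(2)[of "Blk K l m"] by metis
    from a b show "Tc c (Blk K l m) = 0"
      using c4[of c] by (auto simp: complex_eq_iff)
  qed
qed

lemma schwarz_half:
  fixes f :: "'a::real_normed_vector \<Rightarrow> real" and f' :: "'a \<Rightarrow> 'a \<Rightarrow>\<^sub>L real"
    and F2 :: "'a \<Rightarrow>\<^sub>L 'a \<Rightarrow>\<^sub>L real"
  assumes S: "open S" "p \<in> S"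
    and d1: "\<And>x. x \<in> S \<Longrightarrow> (f has_derivative blinfun_apply (f' x)) (at x)"
    and d2: "(f' has_derivative blinfun_apply F2) (at p)"
    and e: "e > 0"
  shows "\<exists>d>0. \<forall>h k. norm h < d \<longrightarrow> norm k < d \<longrightarrow>
     \<bar>(f (p + h + k) - f (p + h) - f (p + k) + f p) - F2 k h\<bar> \<le> 2 * e * (norm h + norm k) * norm h"
proof -
  obtain d0 where d0: "d0 > 0" and
    D0: "\<And>y. norm (y - p) < d0 \<Longrightarrow> norm (f' y - f' p - F2 (y - p)) \<le> e * norm (y - p)"
    using d2 e unfolding has_derivative_at_alt by blast
  obtain r where r: "r > 0" "ball p r \<subseteq> S"
    using S openE by blast
  define d where "d = min d0 r / 2"
  have dpos: "d > 0" using d0 r by (simp add: d_def)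
  show ?thesis
  proof (intro exI[of _ d] conjI allI impI dpos)
    fix h k :: 'a
    assume h: "norm h < d" and k: "norm k < d"
    define \<phi> where "\<phi> t = f (p + t *\<^sub>R h + k) - f (p + t *\<^sub>R h)" for t :: real
    define \<phi>' where "\<phi>' t = f' (p + t *\<^sub>R h + k) h - f' (p + t *\<^sub>R h) h" for t :: real
    have inS: "p + t *\<^sub>R h + k \<in> S" "p + t *\<^sub>R h \<in> S" "norm (t *\<^sub>R h + k) < d0" "norm (t *\<^sub>R h) < d0"
      if "0 \<le> t" "t \<le> 1" for t
    proof -
      have nth: "norm (t *\<^sub>R h) \<le> norm h" using that by (simp add: mult_left_le_one_le)
      have a: "norm (t *\<^sub>R h + k) < 2 * d"
        using norm_triangle_ineq[of "t *\<^sub>R h" k] nth h k by linarith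
      have b: "norm (t *\<^sub>R h) < 2 * d" using nth h dpos by linarith
      have "2 * d \<le> r" "2 * d \<le> d0" by (auto simp: d_def)
      then show "p + t *\<^sub>R h + k \<in> S" "p + t *\<^sub>R h \<in> S" "norm (t *\<^sub>R h + k) < d0" "norm (t *\<^sub>R h) < d0"
      proof -
        have dd: "dist p (p + v) = norm v" for v by (simp add: dist_norm)
        have "p + (t *\<^sub>R h + k) \<in> ball p r" "p + t *\<^sub>R h \<in> ball p r"
          unfolding mem_ball dd using a b \<open>2 * d \<le> r\<close> by linarith+
        then show "p + t *\<^sub>R h + k \<in> S" "p + t *\<^sub>R h \<in> S" "norm (t *\<^sub>R h + k) < d0" "norm (t *\<^sub>R h) < d0"
          using a b r(2) \<open>2 * d \<le> d0\<close> by (auto simp: add.assoc)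
      qed
    qed
    have der: "DERIV \<phi> t :> \<phi>' t" if "0 \<le> t" "t \<le> 1" for t
    proof -
      have "((\<lambda>t. f (p + t *\<^sub>R h + k)) has_derivative (\<lambda>s. f' (p + t *\<^sub>R h + k) (s *\<^sub>R h))) (at t)"
        by (rule has_derivative_compose[of "\<lambda>t. p + t *\<^sub>R h + k" "\<lambda>s. s *\<^sub>R h", unfolded o_def])
           (auto intro!: derivative_eq_intros d1 inS that)
      moreover have "((\<lambda>t. f (p + t *\<^sub>R h)) has_derivative (\<lambda>s. f' (p + t *\<^sub>R h) (s *\<^sub>R h))) (at t)"
        by (rule has_derivative_compose[of "\<lambda>t. p + t *\<^sub>R h" "\<lambda>s. s *\<^sub>R h", unfolded o_def])
           (auto intro!: derivative_eq_intros d1 inS that)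
      ultimately have "(\<phi> has_derivative (\<lambda>s. f' (p + t *\<^sub>R h + k) (s *\<^sub>R h) - f' (p + t *\<^sub>R h) (s *\<^sub>R h))) (at t)"
        unfolding \<phi>_def by (rule has_derivative_diff)
      then show ?thesis
        unfolding has_field_derivative_def \<phi>'_def
        by (rule has_derivative_eq_rhs) (auto simp: blinfun.scaleR_right algebra_simps)
    qed
    obtain z where z: "0 < z" "z < 1" "\<phi> 1 - \<phi> 0 = (1 - 0) * \<phi>' z"
      using MVT2[of 0 1 \<phi> \<phi>'] der by auto
    have \<Delta>: "f (p + h + k) - f (p + h) - f (p + k) + f p = \<phi>' z"
      using z(3) by (simp add: \<phi>_def)
    define A where "A = f' (p + z *\<^sub>R h + k) - f' p - F2 (z *\<^sub>R h + k)"
    define B where "B = f' (p + z *\<^sub>R h) - f' p - F2 (z *\<^sub>R h)"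
    have eq: "\<phi>' z - F2 k h = A h - B h"
      unfolding \<phi>'_def A_def B_def
      by (simp add: blinfun.diff_left blinfun.add_left blinfun.add_right blinfun.scaleR_left)
    have nA: "norm A \<le> e * norm (z *\<^sub>R h + k)"
      using D0[of "p + z *\<^sub>R h + k"] inS(3)[of z] z by (simp add: A_def add.assoc)
    have nB: "norm B \<le> e * norm (z *\<^sub>R h)"
      using D0[of "p + z *\<^sub>R h"] inS(4)[of z] z by (simp add: B_def)
    have nzh: "norm (z *\<^sub>R h) \<le> norm h" using z by (simp add: mult_left_le_one_le)
    have n1: "norm (z *\<^sub>R h + k) \<le> norm h + norm k"
      using norm_triangle_ineq[of "z *\<^sub>R h" k] nzh by linarith
    have "\<bar>A h\<bar> \<le> norm A * norm h" using norm_blinfun[of A h] by simp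
    also have "\<dots> \<le> e * (norm h + norm k) * norm h"
      using nA n1 e by (intro mult_right_mono) (auto intro: order_trans mult_left_mono)
    finally have a: "\<bar>A h\<bar> \<le> e * (norm h + norm k) * norm h" .
    have "\<bar>B h\<bar> \<le> norm B * norm h" using norm_blinfun[of B h] by simp
    also have "\<dots> \<le> e * (norm h + norm k) * norm h"
    proof (intro mult_right_mono)
      have "norm (z *\<^sub>R h) \<le> norm h + norm k" using nzh norm_ge_zero[of k] by linarith
      then have "e * norm (z *\<^sub>R h) \<le> e * (norm h + norm k)" using e by (intro mult_left_mono) auto
      then show "norm B \<le> e * (norm h + norm k)" using nB by linarith
    qed simp
    finally have b: "\<bar>B h\<bar> \<le> e * (norm h + norm k) * norm h" .
    show "\<bar>(f (p + h + k) - f (p + h) - f (p + k) + f p) - F2 k h\<bar> \<le> 2 * e * (norm h + norm k) * norm h"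
      using a b unfolding \<Delta> eq by linarith
  qed
qed


lemma schwarz:
  fixes f :: "'a::real_normed_vector \<Rightarrow> real" and f' :: "'a \<Rightarrow> 'a \<Rightarrow>\<^sub>L real"
    and F2 :: "'a \<Rightarrow>\<^sub>L 'a \<Rightarrow>\<^sub>L real"
  assumes S: "open S" "p \<in> S"
    and d1: "\<And>x. x \<in> S \<Longrightarrow> (f has_derivative blinfun_apply (f' x)) (at x)"
    and d2: "(f' has_derivative blinfun_apply F2) (at p)"
  shows "F2 h k = F2 k h"
proof -
  define C where "C = (norm h + norm k)^2"
  define X where "X = F2 k h - F2 h k"
  have C0: "C \<ge> 0" by (simp add: C_def)
  have bound: "\<bar>X\<bar> \<le> 2 * e * C" if e: "e > 0" for e
  proof -
    obtain d where d: "d > 0" and D: "\<And>h k. norm h < d \<Longrightarrow> norm k < d \<Longrightarrow>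
       \<bar>(f (p + h + k) - f (p + h) - f (p + k) + f p) - F2 k h\<bar> \<le> 2 * e * (norm h + norm k) * norm h"
      using schwarz_half[OF S d1 d2 e] by blast
    define s where "s = d / (norm h + norm k + 1)"
    have s0: "s > 0" using d by (simp add: s_def add_nonneg_pos)
    have sh: "s * norm h < d" and sk: "s * norm k < d"
    proof -
      have "norm h + norm k + 1 > 0" by (simp add: add_nonneg_pos)
      then have "s * (norm h + norm k + 1) = d" unfolding s_def
        by simp
      then show "s * norm h < d" "s * norm k < d" using s0
        by (smt (verit) distrib_left mult_pos_pos norm_ge_zero mult_nonneg_nonneg)+
    qed
    let ?h = "s *\<^sub>R h" and ?k = "s *\<^sub>R k"
    have n1: "norm ?h < d" "norm ?k < d" using sh sk s0 by auto
    have e1: "\<bar>(f (p + ?h + ?k) - f (p + ?h) - f (p + ?k) + f p) - F2 ?k ?h\<bar> \<le> 2 * e * (norm ?h + norm ?k) * norm ?h"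
      using D n1 by blast
    have e2: "\<bar>(f (p + ?k + ?h) - f (p + ?k) - f (p + ?h) + f p) - F2 ?h ?k\<bar> \<le> 2 * e * (norm ?k + norm ?h) * norm ?k"
      using D n1 by blast
    have sw: "p + ?k + ?h = p + ?h + ?k" by (simp add: algebra_simps)
    have F1: "F2 ?k ?h = s * s * F2 k h" and F2': "F2 ?h ?k = s * s * F2 h k"
      by (simp_all add: blinfun.scaleR_left blinfun.scaleR_right)
    have "\<bar>s * s * X\<bar> \<le> 2 * e * (norm ?h + norm ?k) * norm ?h + 2 * e * (norm ?k + norm ?h) * norm ?k"
      using e1 e2 unfolding sw F1 F2' X_def by (simp add: algebra_simps) linarith
    also have "\<dots> = s * s * (2 * e * C)"
      using s0 by (simp add: C_def power2_eq_square algebra_simps)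
    finally have "s * s * \<bar>X\<bar> \<le> s * s * (2 * e * C)" using s0 by (simp add: abs_mult)
    then show ?thesis using s0 by simp
  qed
  have "X = 0"
  proof (rule ccontr)
    assume "X \<noteq> 0"
    then have "\<bar>X\<bar> > 0" by simp
    define e where "e = \<bar>X\<bar> / (4 * (C + 1))"
    have e0: "e > 0" using \<open>\<bar>X\<bar> > 0\<close> C0 by (simp add: e_def)
    have "2 * e * C = \<bar>X\<bar> * (C / (2 * (C + 1)))" using C0 by (simp add: e_def field_simps)
    also have "\<dots> < \<bar>X\<bar> * 1"
      using C0 \<open>\<bar>X\<bar> > 0\<close> by (intro mult_strict_left_mono) (auto simp: field_simps)
    finally show False using bound[OF e0] by simp
  qed
  then show ?thesis by (simp add: X_def)
qed

definition om :: "real^4^'n::finite \<Rightarrow> real^4^'n \<Rightarrow> real" where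
  "om x v = (\<Sum>l\<in>UNIV. x$l$0* v$l$1 - x$l$1* v$l$0 + x$l$2* v$l$3 - x$l$3* v$l$2)"

definition hv :: "'n::finite hpt \<Rightarrow> real^4^'n \<Rightarrow> 'n hpt" where
  "hv p v = (v, 2 * om (fst p) v)"

lemma om_add1: "om (x + y) v = om x v + om y v"
  unfolding om_def by (simp add: sum.distrib[symmetric] algebra_simps)
lemma om_add2: "om x (v + w) = om x v + om x w"
  unfolding om_def by (simp add: sum.distrib[symmetric] algebra_simps)
lemma om_scale1: "om (c *\<^sub>R x) v = c * om x v"
  unfolding om_def by (simp add: sum_distrib_left algebra_simps)
lemma om_scale2: "om x (c *\<^sub>R v) = c * om x v"
  unfolding om_def by (simp add: sum_distrib_left algebra_simps)
lemma om_self: "om v v = 0"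
  unfolding om_def by (simp add: algebra_simps)
lemma om_zero: "om x 0 = 0" "om 0 v = 0"
  unfolding om_def by simp_all

lemma linear_om1: "linear (\<lambda>x. om x v)"
  by (rule linearI) (simp_all add: om_add1 om_scale1)
lemma linear_om2: "linear (\<lambda>v. om x v)"
  by (rule linearI) (simp_all add: om_add2 om_scale2)

lemma hmult_om: "hmult p r = (fst p + fst r, snd p + snd r + 2 * om (fst p) (fst r))"
  unfolding hmult_def om_def by (simp add: algebra_simps)

lemma E_comp: "E l a $ l' $ b = (if l' = l \<and> b = a then 1 else 0)"
  unfolding E_def by (simp add: axis_def)

lemma Xvf_hv: fixes l :: "'n::finite" shows "Xvf l a p = hv p (E l a)"
proof -
  have s: "om x (E l a) = x$l$0 * (if a = 1 then 1 else 0) - x$l$1 * (if a = 0 then 1 else 0)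
       + x$l$2 * (if a = 3 then 1 else 0) - x$l$3 * (if a = 2 then 1 else 0)" for x :: "real^4^'n"
    unfolding om_def E_comp
    by (rule trans[OF sum_one[of l]]) auto
  have a4: "a = 0 \<or> a = 1 \<or> a = 2 \<or> a = 3" using UNIV4 by auto
  show ?thesis
    using a4 unfolding Xvf_def hv_def s by (auto simp: E_def)
qed

definition J4 :: "4 \<Rightarrow> 4 \<Rightarrow> real" where
  "J4 a b = (if a = 0 \<and> b = 1 then 1 else if a = 1 \<and> b = 0 then -1
     else if a = 2 \<and> b = 3 then 1 else if a = 3 \<and> b = 2 then -1 else 0)"

lemma om_E: "om (E l a) (E m b) = (if l = m then J4 a b else 0)"
proof -
  have a4: "x = 0 \<or> x = 1 \<or> x = 2 \<or> x = 3" for x :: 4 using UNIV4 by auto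
  show ?thesis
  proof (cases "l = m")
    case True
    then show ?thesis unfolding om_def E_comp
      by (subst sum_one[of l]) (use a4[of a] a4[of b] in \<open>auto simp: J4_def\<close>)
  next
    case False
    then show ?thesis unfolding om_def E_comp by (auto intro!: sum.neutral)
  qed
qed

lemma Jcancel:
  "(\<Sum>a\<in>UNIV. \<Sum>b\<in>UNIV. zv r False a * zv s True b * of_real (J4 a b))
   - (\<Sum>a\<in>UNIV. \<Sum>b\<in>UNIV. zv s False a * zv r True b * of_real (J4 a b)) = 0"
  by (cases r; cases s) (simp_all add: sum4 zv_def J4_def)

definition isR :: "'a + 'a \<Rightarrow> bool" where "isR A = (case A of Inl _ \<Rightarrow> False | Inr _ \<Rightarrow> True)"
definition zl :: "'a + 'a \<Rightarrow> 'a" where "zl A = (case A of Inl l \<Rightarrow> l | Inr l \<Rightarrow> l)"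

lemma Zop_sum: "Zop A s g p = (\<Sum>a\<in>UNIV. zv (isR A) s a * Xop (zl A) a g p)"
  by (cases A; cases s) (simp_all add: Zop_def sum4 zv_def isR_def zl_def)

lemma dirder_eq:
  assumes "(f has_derivative f') (at p)"
  shows "dirder f p v = f' v"
proof -
  have bl: "bounded_linear f'" using assms by (rule has_derivative_bounded_linear)
  have "((\<lambda>s. p + s *\<^sub>R v) has_derivative (\<lambda>s. s *\<^sub>R v)) (at 0)"
    by (auto intro!: derivative_eq_intros)
  moreover have "(f has_derivative f') (at (p + 0 *\<^sub>R v))" using assms by simp
  ultimately have "((\<lambda>s. f (p + s *\<^sub>R v)) has_derivative (\<lambda>s. f' (s *\<^sub>R v))) (at 0)"
    using has_derivative_compose[of "\<lambda>s. p + s *\<^sub>R v" "\<lambda>s. s *\<^sub>R v" 0 UNIV f f'] by (simp add: o_def)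
  then have "((\<lambda>s. f (p + s *\<^sub>R v)) has_vector_derivative f' v) (at 0)"
    unfolding has_vector_derivative_def
    by (rule has_derivative_eq_rhs) (simp add: linear_scale[OF bounded_linear.linear[OF bl]])
  then show ?thesis unfolding dirder_def by (rule vector_derivative_at)
qed

lemma hv_deriv: fixes v :: "real^4^'n::finite" shows "((\<lambda>x. hv x v) has_derivative (\<lambda>h. (0, 2 * om (fst h) v))) (at x)"
proof -
  have "linear (\<lambda>h::'n::finite hpt. om (fst h) v)"
    using linear_compose[OF linear_fst linear_om1[of v]] by (simp add: o_def)
  then have bl: "bounded_linear (\<lambda>h::'n hpt. om (fst h) v)"
    by (simp add: linear_conv_bounded_linear)
  have "((\<lambda>h::'n hpt. om (fst h) v) has_derivative (\<lambda>h. om (fst h) v)) (at x)"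
    by (rule bounded_linear_imp_has_derivative[OF bl])
  then show ?thesis unfolding hv_def
    by (intro has_derivative_Pair has_derivative_const has_derivative_mult_right)
qed

lemma dPhi:
  assumes "(G has_derivative blinfun_apply H) (at p)"
  shows "((\<lambda>x. blinfun_apply (G x) (hv x v)) has_derivative
     (\<lambda>h. blinfun_apply (G p) (0, 2 * om (fst h) v) + blinfun_apply (H h) (hv p v))) (at p)"
  using blinfun.FDERIV[OF assms hv_deriv] by simp

definition Kf :: "('n::finite hpt \<Rightarrow> 'n hpt \<Rightarrow>\<^sub>L 'n hpt \<Rightarrow>\<^sub>L real) \<Rightarrow> 'n hpt \<Rightarrow> real^4^'n \<Rightarrow> real^4^'n \<Rightarrow> real" where
  "Kf H p v w = blinfun_apply (blinfun_apply (H p) (hv p v)) (hv p w)"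

definition NN :: "('n::finite hpt \<Rightarrow> 'n hpt \<Rightarrow>\<^sub>L real) \<Rightarrow> ('n hpt \<Rightarrow> 'n hpt \<Rightarrow>\<^sub>L 'n hpt \<Rightarrow>\<^sub>L real) \<Rightarrow> 'n hpt \<Rightarrow> real^4^'n \<Rightarrow> real^4^'n \<Rightarrow> real" where
  "NN G H p v w = Kf H p v w + blinfun_apply (G p) (0, 2 * om v w)"

lemma hv_add: "hv p (v + w) = hv p v + hv p w"
  unfolding hv_def by (simp add: om_add2 algebra_simps)
lemma hv_scale: "hv p (c *\<^sub>R v) = c *\<^sub>R hv p v"
  unfolding hv_def by (simp add: om_scale2)

lemma Kf_bilinear: "bilinear (Kf H p)"
  unfolding bilinear_def Kf_def
  by (auto intro!: linearI simp: hv_add hv_scale blinfun.add_left blinfun.add_right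
      blinfun.scaleR_left blinfun.scaleR_right)

lemma NN_split: "NN G H p v w = Kf H p v w + 2 * om v w * blinfun_apply (G p) (0, 1)"
proof -
  have e: "(0::real^4^'n, 2 * om v w) = (2 * om v w) *\<^sub>R (0, 1)" by simp
  show ?thesis unfolding NN_def by (subst e, subst blinfun.scaleR_right) simp
qed

lemma sum_delta2:
  fixes g :: "'a::finite \<Rightarrow> 'a \<Rightarrow> complex"
  shows "(\<Sum>A\<in>UNIV. \<Sum>B\<in>UNIV. g A B * ((if A = C \<and> B = D then 1 else 0) - (if A = D \<and> B = C then 1 else 0)))
     = g C D - g D C"
proof -
  have e: "(if A = C \<and> B = D then 1 else 0) = (if A = C then (if B = D then 1 else 0) else (0::complex))" for A B C D
    by auto
  have dd: "(\<Sum>A\<in>UNIV. \<Sum>B\<in>UNIV. if A = C then if B = D then x else 0 else 0) = x" for x :: complex and C D :: 'a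
  proof -
    have "(\<Sum>B\<in>UNIV. if A = C then if B = D then x else 0 else 0) = (if A = C then x else 0)" for A
      by auto
    then show ?thesis by simp
  qed
  show ?thesis
    by (simp add: right_diff_distrib sum_subtractf e if_distrib[where f="\<lambda>x. g _ _ * x"] dd cong: if_cong)
qed

lemma sublap_Z:
  "sublap u p C D' = Zop C False (Zop D' True (\<lambda>x. complex_of_real (u x))) p
                    - Zop D' False (Zop C True (\<lambda>x. complex_of_real (u x))) p"
  unfolding sublap_def
  by (subst sum_delta2) (simp add: algebra_simps)


context
  fixes u :: "'n::finite hpt \<Rightarrow> real" and D :: "'n hpt set"
    and G :: "'n hpt \<Rightarrow> 'n hpt \<Rightarrow>\<^sub>L real" and H :: "'n hpt \<Rightarrow> 'n hpt \<Rightarrow>\<^sub>L 'n hpt \<Rightarrow>\<^sub>L real"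
  assumes oD: "open D"
    and dG: "\<And>x. x \<in> D \<Longrightarrow> (u has_derivative blinfun_apply (G x)) (at x)"
    and dH: "\<And>x. x \<in> D \<Longrightarrow> (G has_derivative blinfun_apply (H x)) (at x)"
begin

lemma Xop_u: "p \<in> D \<Longrightarrow> Xop l a (\<lambda>x. complex_of_real (u x)) p = of_real (blinfun_apply (G p) (hv p (E l a)))"
  unfolding Xop_def Xvf_hv
  by (rule dirder_eq) (rule has_derivative_of_real[OF dG])

lemma XZ:
  assumes p: "p \<in> D"
  shows "Xop l a (\<lambda>x. \<Sum>b\<in>UNIV. c b * Xop m b (\<lambda>x. complex_of_real (u x)) x) p
       = (\<Sum>b\<in>UNIV. c b * of_real (NN G H p (E l a) (E m b)))"
proof -
  have der: "((\<lambda>x. \<Sum>b\<in>UNIV. c b * of_real (blinfun_apply (G x) (hv x (E m b)))) has_derivative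
      (\<lambda>h. \<Sum>b\<in>UNIV. c b * of_real (blinfun_apply (G p) (0, 2 * om (fst h) (E m b))
             + blinfun_apply (blinfun_apply (H p) h) (hv p (E m b))))) (at p)"
    by (intro has_derivative_sum has_derivative_mult_right has_derivative_of_real dPhi dH p)
  have der2: "((\<lambda>x. \<Sum>b\<in>UNIV. c b * Xop m b (\<lambda>x. complex_of_real (u x)) x) has_derivative
      (\<lambda>h. \<Sum>b\<in>UNIV. c b * of_real (blinfun_apply (G p) (0, 2 * om (fst h) (E m b))
             + blinfun_apply (blinfun_apply (H p) h) (hv p (E m b))))) (at p)"
    by (rule has_derivative_transform_within_open[OF der oD p]) (simp add: Xop_u)
  show ?thesis
    unfolding Xop_def[of l a] Xvf_hv dirder_eq[OF der2]
    by (simp add: NN_def Kf_def hv_def add.commute)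
qed

lemma Z2:
  assumes p: "p \<in> D"
  shows "Zop A False (Zop B True (\<lambda>x. complex_of_real (u x))) p
     = (\<Sum>a\<in>UNIV. \<Sum>b\<in>UNIV. zv (isR A) False a * zv (isR B) True b * of_real (NN G H p (E (zl A) a) (E (zl B) b)))"
proof -
  have "Zop B True (\<lambda>x. complex_of_real (u x)) = (\<lambda>x. \<Sum>b\<in>UNIV. zv (isR B) True b * Xop (zl B) b (\<lambda>x. complex_of_real (u x)) x)"
    by (rule ext) (rule Zop_sum)
  then show ?thesis
    by (simp add: Zop_sum[of A] XZ[OF p] sum_distrib_left mult.assoc)
qed

lemma sublap_gam:
  assumes p: "p \<in> D" and sym: "\<forall>v w. Kf H p v w = Kf H p w v"
  shows "sublap u p C D' = gamB (isR C) (isR D') (Blk (Kf H p) (zl C) (zl D'))"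
proof -
  define g where "g = blinfun_apply (G p) (0, 1)"
  define S1 where "S1 A B = (\<Sum>a\<in>UNIV. \<Sum>b\<in>UNIV. zv (isR A) False a * zv (isR B) True b * of_real (Kf H p (E (zl A) a) (E (zl B) b)))" for A B :: "'n + 'n"
  define S2 where "S2 A B = (\<Sum>a\<in>UNIV. \<Sum>b\<in>UNIV. zv (isR A) False a * zv (isR B) True b * of_real (om (E (zl A) a) (E (zl B) b)))" for A B :: "'n + 'n"
  have Z: "Zop A False (Zop B True (\<lambda>x. complex_of_real (u x))) p = S1 A B + of_real (2 * g) * S2 A B" for A B
    unfolding Z2[OF p] S1_def S2_def NN_split g_def
    by (simp add: ring_distribs sum.distrib sum_distrib_left mult_ac)
  have S2z: "S2 C D' - S2 D' C = 0"
  proof (cases "zl C = zl D'")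
    case True
    then show ?thesis unfolding S2_def om_E using Jcancel[of "isR C" "isR D'"] by simp
  next
    case False
    then show ?thesis unfolding S2_def om_E by auto
  qed
  have S1g: "S1 C D' - S1 D' C = gamB (isR C) (isR D') (Blk (Kf H p) (zl C) (zl D'))"
    unfolding S1_def gamB_def Blk_def using sym by simp
  have "sublap u p C D' = (S1 C D' - S1 D' C) + of_real (2 * g) * (S2 C D' - S2 D' C)"
    unfolding sublap_Z Z by (simp add: algebra_simps)
  then show ?thesis using S1g S2z by simp
qed

lemma sublap_iff:
  assumes p: "p \<in> D" and sym: "\<forall>v w. Kf H p v w = Kf H p w v"
  shows "(sublap u p = (\<lambda>C D'. 0)) \<longleftrightarrow> (\<forall>r s l m. gamB r s (Blk (Kf H p) l m) = 0)"
proof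
  assume h: "sublap u p = (\<lambda>C D'. 0)"
  show "\<forall>r s l m. gamB r s (Blk (Kf H p) l m) = 0"
  proof (intro allI)
    fix r s l m
    define C where "C = (if r then Inr l else Inl l :: 'n + 'n)"
    define D' where "D' = (if s then Inr m else Inl m :: 'n + 'n)"
    have "isR C = r" "zl C = l" "isR D' = s" "zl D' = m"
      unfolding C_def D'_def isR_def zl_def by auto
    moreover have "sublap u p C D' = 0" using h by simp
    ultimately show "gamB r s (Blk (Kf H p) l m) = 0"
      using sublap_gam[OF p sym, of C D'] by simp
  qed
next
  assume h: "\<forall>r s l m. gamB r s (Blk (Kf H p) l m) = 0"
  show "sublap u p = (\<lambda>C D'. 0)"
    using h by (auto simp: sublap_gam[OF p sym] fun_eq_iff)
qed

end

definition Qm :: "real^4^'n::finite \<Rightarrow> real^4 \<Rightarrow> real^4^'n" where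
  "Qm q x = (\<chi> l. qmult (q$l) x)"

lemma qmult_add2: "qmult p (x + y) = qmult p x + qmult p y"
  by (simp add: qmult_def vec_eq_iff algebra_simps)
lemma qmult_scale2: "qmult p (c *\<^sub>R x) = c *\<^sub>R qmult p x"
  by (simp add: qmult_def vec_eq_iff algebra_simps)

lemma Qm_add: "Qm q (x + y) = Qm q x + Qm q y"
  by (simp add: Qm_def vec_eq_iff qmult_add2)
lemma Qm_scale: "Qm q (c *\<^sub>R x) = c *\<^sub>R Qm q x"
  by (simp add: Qm_def vec_eq_iff qmult_scale2)
lemma Qm_zero: "Qm q 0 = 0"
  by (simp add: Qm_def vec_eq_iff qmult_zero)

definition dI :: "'n::finite hpt \<Rightarrow> real^4^'n \<Rightarrow> ((real^4) \<times> real) \<Rightarrow> 'n hpt" where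
  "dI \<eta> q h = (Qm q (fst h), snd h + 2 * om (fst \<eta>) (Qm q (fst h)))"

lemma iota_affine: "iota \<eta> q w = \<eta> + dI \<eta> q w"
  unfolding iota_def hmult_om dI_def Qm_def by (simp add: prod_eq_iff)

lemma linear_dI: "linear (dI \<eta> q)"
  unfolding dI_def
  by (rule linearI) (simp_all add: Qm_add Qm_scale om_add2 om_scale2 algebra_simps)

lemma iota_deriv: "(iota \<eta> q has_derivative dI \<eta> q) (at w)"
proof -
  have bl: "bounded_linear (dI \<eta> q)" using linear_dI linear_conv_bounded_linear by blast
  have "((\<lambda>w. \<eta> + dI \<eta> q w) has_derivative (\<lambda>h. 0 + dI \<eta> q h)) (at w)"
    by (rule has_derivative_add[OF has_derivative_const bounded_linear_imp_has_derivative[OF bl]])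
  then show ?thesis unfolding iota_affine[abs_def] by simp
qed

lemma iota_zero: "iota p q 0 = p"
  unfolding iota_affine dI_def by (simp add: Qm_zero om_zero zero_prod_def)

lemma BqL: "(\<Sum>k\<in>UNIV. (transpose (qR p) ** Jmat ** qR p) $ k $ j * x $ k)
   = qmult p x $ 0 * qmult p (axis j 1) $ 1 - qmult p x $ 1 * qmult p (axis j 1) $ 0
   + qmult p x $ 2 * qmult p (axis j 1) $ 3 - qmult p x $ 3 * qmult p (axis j 1) $ 2"
proof -
  have j4: "j = 0 \<or> j = 1 \<or> j = 2 \<or> j = 3" using UNIV4 by auto
  show ?thesis
    using j4 unfolding matrix_matrix_mult_def transpose_def qR_def Jmat_def
    by (elim disjE) (simp_all add: sum4 qmult_comp axis_comp algebra_simps)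
qed

lemma Bq_lemma: "(\<Sum>k\<in>UNIV. Bq q $ k $ j * x $ k) = om (Qm q x) (Vq q j)"
proof -
  have "(\<Sum>k\<in>UNIV. Bq q $ k $ j * x $ k)
      = (\<Sum>k\<in>UNIV. \<Sum>l\<in>UNIV. (transpose (qR (q$l)) ** Jmat ** qR (q$l)) $ k $ j * x $ k)"
    unfolding Bq_def by (simp add: sum_distrib_right)
  also have "\<dots> = (\<Sum>l\<in>UNIV. \<Sum>k\<in>UNIV. (transpose (qR (q$l)) ** Jmat ** qR (q$l)) $ k $ j * x $ k)"
    by (rule sum.swap)
  also have "\<dots> = om (Qm q x) (Vq q j)"
    unfolding om_def Qm_def Vq_def BqL by simp
  finally show ?thesis .
qed

lemma dI_tX: "dI \<eta> q (tXvf (Bq q) j w) = hv (iota \<eta> q w) (Vq q j)"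
proof -
  have v: "Qm q (axis j 1) = Vq q j" by (simp add: Qm_def Vq_def)
  show ?thesis
    unfolding dI_def tXvf_def hv_def iota_affine
    by (simp add: v om_add1 Bq_lemma[symmetric] dI_def algebra_simps)
qed


context
  fixes u :: "'n::finite hpt \<Rightarrow> real" and D :: "'n hpt set"
    and G :: "'n hpt \<Rightarrow> 'n hpt \<Rightarrow>\<^sub>L real" and H :: "'n hpt \<Rightarrow> 'n hpt \<Rightarrow>\<^sub>L 'n hpt \<Rightarrow>\<^sub>L real"
  assumes oD: "open D"
    and dG: "\<And>x. x \<in> D \<Longrightarrow> (u has_derivative blinfun_apply (G x)) (at x)"
    and dH: "\<And>x. x \<in> D \<Longrightarrow> (G has_derivative blinfun_apply (H x)) (at x)"
begin

lemma tX1: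
  assumes "iota \<eta> q w' \<in> D"
  shows "tX (Bq q) j (\<lambda>w. u (iota \<eta> q w)) w' = blinfun_apply (G (iota \<eta> q w')) (hv (iota \<eta> q w') (Vq q j))"
proof -
  have "((\<lambda>w. u (iota \<eta> q w)) has_derivative (\<lambda>h. blinfun_apply (G (iota \<eta> q w')) (dI \<eta> q h))) (at w')"
    using has_derivative_compose[OF iota_deriv dG[OF assms]] by (simp add: o_def)
  then show ?thesis unfolding tX_def by (simp add: dirder_eq dI_tX)
qed

lemma tX2:
  assumes w: "iota \<eta> q w \<in> D"
  shows "tX (Bq q) j (tX (Bq q) j (\<lambda>w. u (iota \<eta> q w))) w = Kf H (iota \<eta> q w) (Vq q j) (Vq q j)"
proof -
  let ?p = "iota \<eta> q w" and ?V = "Vq q j"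
  define U where "U = iota \<eta> q -` D"
  have oU: "open U" unfolding U_def
    by (rule continuous_open_vimage[OF oD]) (rule has_derivative_continuous[OF iota_deriv])
  have wU: "w \<in> U" using w by (simp add: U_def)
  have "((\<lambda>w'. blinfun_apply (G (iota \<eta> q w')) (hv (iota \<eta> q w') ?V)) has_derivative
     ((\<lambda>h. blinfun_apply (G ?p) (0, 2 * om (fst h) ?V) + blinfun_apply (blinfun_apply (H ?p) h) (hv ?p ?V)) \<circ> dI \<eta> q)) (at w)"
    using has_derivative_compose[OF iota_deriv dPhi[OF dH[OF w]]] by (simp add: o_def)
  then have der: "(tX (Bq q) j (\<lambda>w. u (iota \<eta> q w)) has_derivative
     ((\<lambda>h. blinfun_apply (G ?p) (0, 2 * om (fst h) ?V) + blinfun_apply (blinfun_apply (H ?p) h) (hv ?p ?V)) \<circ> dI \<eta> q)) (at w)"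
    by (rule has_derivative_transform_within_open[OF _ oU wU]) (simp add: U_def tX1)
  have z: "(0::real^4^'n, 0::real) = 0" by (simp add: zero_prod_def)
  show ?thesis
    unfolding tX_def[of _ _ "tX (Bq q) j _"] dirder_eq[OF der]
    by (simp add: dI_tX hv_def om_self Kf_def z)
qed

lemma tLap_eq:
  assumes w: "iota \<eta> q w \<in> D"
  shows "tLap q (\<lambda>w. u (iota \<eta> q w)) w = (\<Sum>j\<in>UNIV. Kf H (iota \<eta> q w) (Vq q j) (Vq q j))"
  unfolding tLap_def using tX2[OF w] by simp

end

theorem corollary4p2:
  fixes u :: "'n::finite hpt \<Rightarrow> real" and D :: "'n hpt set"
  assumes "open D" and "connected D" and "C2_on D u"
  shows "pluriharmonic D u \<longleftrightarrow> (\<forall>p\<in>D. sublap u p = (\<lambda>C D'. 0))"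
proof -
  obtain G H where dG0: "\<forall>x\<in>D. (u has_derivative blinfun_apply (G x)) (at x)"
    and dH0: "\<forall>x\<in>D. (G has_derivative blinfun_apply (H x)) (at x)"
    using assms(3) unfolding C2_on_def by blast
  have dG: "\<And>x. x \<in> D \<Longrightarrow> (u has_derivative blinfun_apply (G x)) (at x)" using dG0 by blast
  have dH: "\<And>x. x \<in> D \<Longrightarrow> (G has_derivative blinfun_apply (H x)) (at x)" using dH0 by blast
  have sym: "\<forall>v w. Kf H p v w = Kf H p w v" if p: "p \<in> D" for p
    unfolding Kf_def using schwarz[OF assms(1) p dG dH[OF p]] by blast
  have step1: "pluriharmonic D u \<longleftrightarrow>
      (\<forall>p\<in>D. \<forall>q. q \<notin> degset \<longrightarrow> (\<Sum>j\<in>UNIV. Kf H p (Vq q j) (Vq q j)) = 0)"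
  proof
    assume ph: "pluriharmonic D u"
    show "\<forall>p\<in>D. \<forall>q. q \<notin> degset \<longrightarrow> (\<Sum>j\<in>UNIV. Kf H p (Vq q j) (Vq q j)) = 0"
    proof (intro ballI allI impI)
      fix p q
      assume p: "p \<in> D" and q: "q \<notin> (degset :: (real^4^'n) set)"
      have pin: "iota p q 0 \<in> D" using p by (simp add: iota_zero)
      have "tLap q (\<lambda>w. u (iota p q w)) 0 = 0"
        using ph q pin unfolding pluriharmonic_def by blast
      then show "(\<Sum>j\<in>UNIV. Kf H p (Vq q j) (Vq q j)) = 0"
        using tLap_eq[OF assms(1) dG dH pin] by (simp add: iota_zero)
    qed
  next
    assume h: "\<forall>p\<in>D. \<forall>q. q \<notin> degset \<longrightarrow> (\<Sum>j\<in>UNIV. Kf H p (Vq q j) (Vq q j)) = 0"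
    show "pluriharmonic D u"
      unfolding pluriharmonic_def
    proof (intro allI impI)
      fix \<eta> q w
      assume q: "q \<notin> (degset :: (real^4^'n) set)" and w: "iota \<eta> q w \<in> D"
      show "tLap q (\<lambda>w'. u (iota \<eta> q w')) w = 0"
        using tLap_eq[OF assms(1) dG dH w] h w q by simp
    qed
  qed
  have step2: "(\<forall>q. q \<notin> degset \<longrightarrow> (\<Sum>j\<in>UNIV. Kf H p (Vq q j) (Vq q j)) = 0)
      \<longleftrightarrow> sublap u p = (\<lambda>C D'. 0)" if p: "p \<in> D" for p
    using P1[OF Kf_bilinear sym[OF p]] P2[of "Kf H p"] sublap_iff[OF assms(1) dG dH p sym[OF p]] by simp
  show ?thesis using step1 step2 by auto
qed

end
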